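(* Every topos is strongly amendable.
   Context: A category is amendable if for every morphism $t_L : L \to L'$ there is a factorization $t_L = \beta \circ t_L'$ with $t_L' : L \rightarrowtail L''$ mono and $\beta : L'' \to L'$ such that for every factorization $t_L = \alpha \circ m$ with $m : L \rightarrowtail G_L$ mono and $\alpha : G_L \to L'$ there exists $\alpha' : G_L \to L''$ with $\alpha' \circ m = t_L'$ and $\beta \circ \alpha' = \alpha$. It is strongly amendable if the factorization $(t_L',\beta)$ can be chosen so that moreover, for every such $(m,\alpha)$, the corresponding $\alpha'$ can be chosen so that $L \xleftarrow{1_L} L \xrightarrow{m} G_L$ is a pullback of $L \xrightarrow{t_L'} L'' \xleftarrow{\alpha'} G_L$. *)

theory Defs
  imports Main
begin

text \<open>A (possibly large) category presented by a set of objects, a set of arrows,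
  domain/codomain maps, composition (Cmp C g f means g after f) and identities.\<close>

record ('o, 'a) category =
  Obj :: "'o set"
  Arr :: "'a set"
  Dom :: "'a \<Rightarrow> 'o"
  Cod :: "'a \<Rightarrow> 'o"
  Cmp :: "'a \<Rightarrow> 'a \<Rightarrow> 'a"
  Idt :: "'o \<Rightarrow> 'a"

definition hom :: "('o, 'a) category \<Rightarrow> 'o \<Rightarrow> 'o \<Rightarrow> 'a set" where
  "hom C x y = {f \<in> Arr C. Dom C f = x \<and> Cod C f = y}"

definition is_category :: "('o, 'a) category \<Rightarrow> bool" where
  "is_category C \<longleftrightarrow>
     (\<forall>f\<in>Arr C. Dom C f \<in> Obj C \<and> Cod C f \<in> Obj C) \<and>
     (\<forall>x\<in>Obj C. Idt C x \<in> hom C x x) \<and>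
     (\<forall>f\<in>Arr C. \<forall>g\<in>Arr C. Cod C f = Dom C g \<longrightarrow> Cmp C g f \<in> hom C (Dom C f) (Cod C g)) \<and>
     (\<forall>f\<in>Arr C. Cmp C f (Idt C (Dom C f)) = f \<and> Cmp C (Idt C (Cod C f)) f = f) \<and>
     (\<forall>f\<in>Arr C. \<forall>g\<in>Arr C. \<forall>h\<in>Arr C. Cod C f = Dom C g \<longrightarrow> Cod C g = Dom C h \<longrightarrow>
        Cmp C h (Cmp C g f) = Cmp C (Cmp C h g) f)"

definition monic :: "('o, 'a) category \<Rightarrow> 'a \<Rightarrow> bool" where
  "monic C m \<longleftrightarrow> m \<in> Arr C \<and>
     (\<forall>g\<in>Arr C. \<forall>h\<in>Arr C. Cod C g = Dom C m \<longrightarrow> Cod C h = Dom C m \<longrightarrow> Dom C g = Dom C h \<longrightarrow>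
        Cmp C m g = Cmp C m h \<longrightarrow> g = h)"

definition terminal :: "('o, 'a) category \<Rightarrow> 'o \<Rightarrow> bool" where
  "terminal C t \<longleftrightarrow> t \<in> Obj C \<and> (\<forall>x\<in>Obj C. \<exists>!f. f \<in> hom C x t)"

definition is_pullback :: "('o, 'a) category \<Rightarrow> 'a \<Rightarrow> 'a \<Rightarrow> 'a \<Rightarrow> 'a \<Rightarrow> bool" where
  "is_pullback C f g p q \<longleftrightarrow>
     f \<in> Arr C \<and> g \<in> Arr C \<and> p \<in> Arr C \<and> q \<in> Arr C \<and>
     Cod C f = Cod C g \<and> Cod C p = Dom C f \<and> Cod C q = Dom C g \<and> Dom C p = Dom C q \<and>
     Cmp C f p = Cmp C g q \<and>
     (\<forall>p'\<in>Arr C. \<forall>q'\<in>Arr C. Cod C p' = Dom C f \<longrightarrow> Cod C q' = Dom C g \<longrightarrow> Dom C p' = Dom C q' \<longrightarrow>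
        Cmp C f p' = Cmp C g q' \<longrightarrow>
        (\<exists>!u. u \<in> hom C (Dom C p') (Dom C p) \<and> Cmp C p u = p' \<and> Cmp C q u = q'))"

definition has_pullbacks :: "('o, 'a) category \<Rightarrow> bool" where
  "has_pullbacks C \<longleftrightarrow>
     (\<forall>f\<in>Arr C. \<forall>g\<in>Arr C. Cod C f = Cod C g \<longrightarrow> (\<exists>p q. is_pullback C f g p q))"

definition is_product :: "('o, 'a) category \<Rightarrow> 'o \<Rightarrow> 'o \<Rightarrow> 'a \<Rightarrow> 'a \<Rightarrow> bool" where
  "is_product C A B p1 p2 \<longleftrightarrow>
     A \<in> Obj C \<and> B \<in> Obj C \<and> p1 \<in> Arr C \<and> p2 \<in> Arr C \<and>
     Dom C p1 = Dom C p2 \<and> Cod C p1 = A \<and> Cod C p2 = B \<and>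
     (\<forall>f\<in>Arr C. \<forall>g\<in>Arr C. Cod C f = A \<longrightarrow> Cod C g = B \<longrightarrow> Dom C f = Dom C g \<longrightarrow>
        (\<exists>!u. u \<in> hom C (Dom C f) (Dom C p1) \<and> Cmp C p1 u = f \<and> Cmp C p2 u = g))"

definition has_binary_products :: "('o, 'a) category \<Rightarrow> bool" where
  "has_binary_products C \<longleftrightarrow> (\<forall>A\<in>Obj C. \<forall>B\<in>Obj C. \<exists>p1 p2. is_product C A B p1 p2)"

text \<open>Cartesian closedness: for all B, D there is an exponential E = D^B with evaluation
  ev : E x B -> D such that every f : A x B -> D factors uniquely as ev o (g x 1_B).\<close>
definition cartesian_closed :: "('o, 'a) category \<Rightarrow> bool" where
  "cartesian_closed C \<longleftrightarrow> has_binary_products C \<and>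
     (\<forall>B\<in>Obj C. \<forall>D\<in>Obj C. \<exists>E ev \<pi>1 \<pi>2. is_product C E B \<pi>1 \<pi>2 \<and> ev \<in> hom C (Dom C \<pi>1) D \<and>
        (\<forall>A\<in>Obj C. \<forall>q1 q2. is_product C A B q1 q2 \<longrightarrow>
           (\<forall>f\<in>hom C (Dom C q1) D. \<exists>!g. g \<in> hom C A E \<and>
              (\<exists>h\<in>hom C (Dom C q1) (Dom C \<pi>1).
                 Cmp C \<pi>1 h = Cmp C g q1 \<and> Cmp C \<pi>2 h = q2 \<and> Cmp C ev h = f))))"

definition has_subobject_classifier :: "('o, 'a) category \<Rightarrow> bool" where
  "has_subobject_classifier C \<longleftrightarrow>
     (\<exists>one \<Omega> tr. terminal C one \<and> \<Omega> \<in> Obj C \<and> tr \<in> hom C one \<Omega> \<and>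
        (\<forall>m. monic C m \<longrightarrow>
           (\<exists>!\<chi>. \<chi> \<in> hom C (Cod C m) \<Omega> \<and> (\<exists>u. is_pullback C \<chi> tr m u))))"

definition topos :: "('o, 'a) category \<Rightarrow> bool" where
  "topos C \<longleftrightarrow> is_category C \<and> (\<exists>t. terminal C t) \<and> has_pullbacks C \<and>
     cartesian_closed C \<and> has_subobject_classifier C"

definition amendable :: "('o, 'a) category \<Rightarrow> bool" where
  "amendable C \<longleftrightarrow>
     (\<forall>tL\<in>Arr C. \<exists>t' \<beta>. monic C t' \<and> Dom C t' = Dom C tL \<and> \<beta> \<in> hom C (Cod C t') (Cod C tL) \<and>
        Cmp C \<beta> t' = tL \<and>
        (\<forall>m \<alpha>. monic C m \<and> Dom C m = Dom C tL \<and> \<alpha> \<in> hom C (Cod C m) (Cod C tL) \<and> Cmp C \<alpha> m = tL \<longrightarrow>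
           (\<exists>\<alpha>'. \<alpha>' \<in> hom C (Cod C m) (Cod C t') \<and> Cmp C \<alpha>' m = t' \<and> Cmp C \<beta> \<alpha>' = \<alpha>)))"

text \<open>Strongly amendable: additionally L <-1- L -m-> G_L is a pullback of
  L -t'-> L'' <-alpha'- G_L.\<close>
definition strongly_amendable :: "('o, 'a) category \<Rightarrow> bool" where
  "strongly_amendable C \<longleftrightarrow>
     (\<forall>tL\<in>Arr C. \<exists>t' \<beta>. monic C t' \<and> Dom C t' = Dom C tL \<and> \<beta> \<in> hom C (Cod C t') (Cod C tL) \<and>
        Cmp C \<beta> t' = tL \<and>
        (\<forall>m \<alpha>. monic C m \<and> Dom C m = Dom C tL \<and> \<alpha> \<in> hom C (Cod C m) (Cod C tL) \<and> Cmp C \<alpha> m = tL \<longrightarrow>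
           (\<exists>\<alpha>'. \<alpha>' \<in> hom C (Cod C m) (Cod C t') \<and> Cmp C \<alpha>' m = t' \<and> Cmp C \<beta> \<alpha>' = \<alpha> \<and>
              is_pullback C t' \<alpha>' (Idt C (Dom C tL)) m)))"

end

theory Submission
  imports Defs
begin


locale cat =
  fixes C :: "('o, 'a) category"
  assumes cat: "is_category C"
begin

abbreviation cmp (infixr "\<cdot>" 55) where "g \<cdot> f \<equiv> Cmp C g f"

lemma dom_obj[simp]: "f \<in> Arr C \<Longrightarrow> Dom C f \<in> Obj C"
  using cat unfolding is_category_def by blast
lemma cod_obj[simp]: "f \<in> Arr C \<Longrightarrow> Cod C f \<in> Obj C"
  using cat unfolding is_category_def by blast
lemma id_arr[simp]: "x \<in> Obj C \<Longrightarrow> Idt C x \<in> Arr C"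
  using cat unfolding is_category_def hom_def by blast
lemma id_dom[simp]: "x \<in> Obj C \<Longrightarrow> Dom C (Idt C x) = x"
  using cat unfolding is_category_def hom_def by blast
lemma id_cod[simp]: "x \<in> Obj C \<Longrightarrow> Cod C (Idt C x) = x"
  using cat unfolding is_category_def hom_def by blast
lemma comp_arr[simp]: "f \<in> Arr C \<Longrightarrow> g \<in> Arr C \<Longrightarrow> Cod C f = Dom C g \<Longrightarrow> g \<cdot> f \<in> Arr C"
  using cat unfolding is_category_def hom_def by blast
lemma comp_dom[simp]: "f \<in> Arr C \<Longrightarrow> g \<in> Arr C \<Longrightarrow> Cod C f = Dom C g \<Longrightarrow> Dom C (g \<cdot> f) = Dom C f"
  using cat unfolding is_category_def hom_def by blast
lemma comp_cod[simp]: "f \<in> Arr C \<Longrightarrow> g \<in> Arr C \<Longrightarrow> Cod C f = Dom C g \<Longrightarrow> Cod C (g \<cdot> f) = Cod C g"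
  using cat unfolding is_category_def hom_def by blast
lemma idl[simp]: "f \<in> Arr C \<Longrightarrow> Cod C f = y \<Longrightarrow> Idt C y \<cdot> f = f"
  using cat unfolding is_category_def by blast
lemma idr[simp]: "f \<in> Arr C \<Longrightarrow> Dom C f = y \<Longrightarrow> f \<cdot> Idt C y = f"
  using cat unfolding is_category_def by blast
lemma assoc: "f \<in> Arr C \<Longrightarrow> g \<in> Arr C \<Longrightarrow> h \<in> Arr C \<Longrightarrow> Cod C f = Dom C g \<Longrightarrow> Cod C g = Dom C h \<Longrightarrow>
   (h \<cdot> g) \<cdot> f = h \<cdot> (g \<cdot> f)"
  using cat unfolding is_category_def by metis

lemma hom_iff: "f \<in> hom C x y \<longleftrightarrow> f \<in> Arr C \<and> Dom C f = x \<and> Cod C f = y"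
  unfolding hom_def by blast

lemma prodD:
  assumes "is_product C A B p1 p2"
  shows "A \<in> Obj C" "B \<in> Obj C" "p1 \<in> Arr C" "p2 \<in> Arr C" "Dom C p2 = Dom C p1" "Cod C p1 = A" "Cod C p2 = B"
  using assms unfolding is_product_def by auto

lemma prod_pair:
  assumes "is_product C A B p1 p2" "f \<in> Arr C" "g \<in> Arr C" "Cod C f = A" "Cod C g = B" "Dom C f = Dom C g"
  obtains u where "u \<in> Arr C" "Dom C u = Dom C f" "Cod C u = Dom C p1" "p1 \<cdot> u = f" "p2 \<cdot> u = g"
  using assms unfolding is_product_def hom_def by blast

lemma prod_uniq:
  assumes "is_product C A B p1 p2" "u \<in> Arr C" "v \<in> Arr C" "Cod C u = Dom C p1" "Cod C v = Dom C p1"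
    "Dom C u = Dom C v" "p1 \<cdot> u = p1 \<cdot> v" "p2 \<cdot> u = p2 \<cdot> v"
  shows "u = v"
proof -
  have P: "p1 \<in> Arr C" "p2 \<in> Arr C" "Dom C p2 = Dom C p1" "Cod C p1 = A" "Cod C p2 = B"
    using prodD[OF assms(1)] by auto
  have U: "\<forall>f\<in>Arr C. \<forall>g\<in>Arr C. Cod C f = A \<longrightarrow> Cod C g = B \<longrightarrow> Dom C f = Dom C g \<longrightarrow>
        (\<exists>!u. u \<in> hom C (Dom C f) (Dom C p1) \<and> p1 \<cdot> u = f \<and> p2 \<cdot> u = g)"
    using assms(1) unfolding is_product_def by blast
  have "\<exists>!w. w \<in> hom C (Dom C (p1 \<cdot> u)) (Dom C p1) \<and> p1 \<cdot> w = p1 \<cdot> u \<and> p2 \<cdot> w = p2 \<cdot> u"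
    apply (rule U[rule_format])
    using P assms by auto
  moreover have "u \<in> hom C (Dom C (p1 \<cdot> u)) (Dom C p1) \<and> p1 \<cdot> u = p1 \<cdot> u \<and> p2 \<cdot> u = p2 \<cdot> u"
    using assms P by (simp add: hom_iff)
  moreover have "v \<in> hom C (Dom C (p1 \<cdot> u)) (Dom C p1) \<and> p1 \<cdot> v = p1 \<cdot> u \<and> p2 \<cdot> v = p2 \<cdot> u"
    using assms P by (simp add: hom_iff)
  ultimately show ?thesis by blast
qed

lemma pbD:
  assumes "is_pullback C f g p q"
  shows "f \<in> Arr C" "g \<in> Arr C" "p \<in> Arr C" "q \<in> Arr C" "Cod C f = Cod C g" "Cod C p = Dom C f"
    "Cod C q = Dom C g" "Dom C p = Dom C q" "f \<cdot> p = g \<cdot> q"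
  using assms unfolding is_pullback_def by auto

lemma pb_factor:
  assumes "is_pullback C f g p q" "p' \<in> Arr C" "q' \<in> Arr C" "Cod C p' = Dom C f" "Cod C q' = Dom C g"
    "Dom C p' = Dom C q'" "f \<cdot> p' = g \<cdot> q'"
  obtains u where "u \<in> Arr C" "Dom C u = Dom C p'" "Cod C u = Dom C p" "p \<cdot> u = p'" "q \<cdot> u = q'"
  using assms unfolding is_pullback_def hom_def by blast

lemma monicD:
  assumes "monic C m" "g \<in> Arr C" "h \<in> Arr C" "Cod C g = Dom C m" "Cod C h = Dom C m" "Dom C g = Dom C h"
    "m \<cdot> g = m \<cdot> h"
  shows "g = h"
  using assms unfolding monic_def by blast

lemma split_monic:
  assumes "R \<in> Arr C" "r \<in> Arr C" "Cod C R = Dom C r" "r \<cdot> R = Idt C (Dom C R)"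
  shows "monic C R"
  unfolding monic_def
proof (intro conjI ballI impI)
  fix g h assume a: "g \<in> Arr C" "h \<in> Arr C" "Cod C g = Dom C R" "Cod C h = Dom C R" "Dom C g = Dom C h" "R \<cdot> g = R \<cdot> h"
  have "g = (r \<cdot> R) \<cdot> g" using assms a by simp
  also have "\<dots> = r \<cdot> (R \<cdot> g)" by (rule assoc) (use assms a in auto)
  also have "\<dots> = r \<cdot> (R \<cdot> h)" using a by simp
  also have "\<dots> = (r \<cdot> R) \<cdot> h" by (rule assoc[symmetric]) (use assms a in auto)
  also have "\<dots> = h" using assms a by simp
  finally show "g = h" .
qed (rule assms(1))

lemma id_monic: "x \<in> Obj C \<Longrightarrow> monic C (Idt C x)"
  unfolding monic_def by auto

end


context cat begin
lemma reassoc: "g \<cdot> f = k \<Longrightarrow> f \<in> Arr C \<Longrightarrow> g \<in> Arr C \<Longrightarrow> h \<in> Arr C \<Longrightarrow> Cod C f = Dom C g \<Longrightarrow>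
   Cod C h = Dom C f \<Longrightarrow> g \<cdot> (f \<cdot> h) = k \<cdot> h"
  using assoc by metis
end

locale ksetup = cat +
  fixes tr \<Omega> L E ev \<pi>1 \<pi>2 d1 d2 \<delta> \<chi>\<delta> u\<delta> s hs
  assumes L: "L \<in> Obj C"
  and tr: "tr \<in> Arr C" "Cod C tr = \<Omega>"
  and classif: "\<forall>m. monic C m \<longrightarrow> (\<exists>!\<chi>. \<chi> \<in> hom C (Cod C m) \<Omega> \<and> (\<exists>u. is_pullback C \<chi> tr m u))"
  and Ep: "is_product C E L \<pi>1 \<pi>2" and ev: "ev \<in> hom C (Dom C \<pi>1) \<Omega>"
  and expo: "\<forall>A\<in>Obj C. \<forall>q1 q2. is_product C A L q1 q2 \<longrightarrow>
           (\<forall>f\<in>hom C (Dom C q1) \<Omega>. \<exists>!g. g \<in> hom C A E \<and>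
              (\<exists>h\<in>hom C (Dom C q1) (Dom C \<pi>1).
                 Cmp C \<pi>1 h = Cmp C g q1 \<and> Cmp C \<pi>2 h = q2 \<and> Cmp C ev h = f))"
  and dp: "is_product C L L d1 d2"
  and \<delta>: "\<delta> \<in> Arr C" "Dom C \<delta> = L" "Cod C \<delta> = Dom C d1" "d1 \<cdot> \<delta> = Idt C L" "d2 \<cdot> \<delta> = Idt C L"
  and \<chi>\<delta>: "\<chi>\<delta> \<in> hom C (Dom C d1) \<Omega>" "is_pullback C \<chi>\<delta> tr \<delta> u\<delta>"
  and s: "s \<in> hom C L E" "hs \<in> hom C (Dom C d1) (Dom C \<pi>1)" "\<pi>1 \<cdot> hs = s \<cdot> d1" "\<pi>2 \<cdot> hs = d2" "ev \<cdot> hs = \<chi>\<delta>"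
  and bp: "has_binary_products C"
begin

lemma K:
  assumes m: "monic C m" "Dom C m = L"
  shows "\<exists>c. c \<in> hom C (Cod C m) E \<and> c \<cdot> m = s \<and>
     (\<forall>x g. x \<in> Arr C \<and> g \<in> Arr C \<and> Cod C x = L \<and> Cod C g = Cod C m \<and> Dom C x = Dom C g \<and>
        s \<cdot> x = c \<cdot> g \<longrightarrow> g = m \<cdot> x)"
proof -
  define G where "G = Cod C m"
  have mA: "m \<in> Arr C" using m unfolding monic_def by blast
  have G: "G \<in> Obj C" using mA G_def by simp
  obtain r1 r2 where rp: "is_product C G L r1 r2" using bp G L unfolding has_binary_products_def by blast
  note RP = prodD[OF rp]
  note DP = prodD[OF dp]
  note EP = prodD[OF Ep]
  have evA: "ev \<in> Arr C" "Dom C ev = Dom C \<pi>1" "Cod C ev = \<Omega>" using ev by (auto simp: hom_iff)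
  have sA: "s \<in> Arr C" "Dom C s = L" "Cod C s = E" "hs \<in> Arr C" "Dom C hs = Dom C d1" "Cod C hs = Dom C \<pi>1"
    using s by (auto simp: hom_iff)
  have cdA: "\<chi>\<delta> \<in> Arr C" "Dom C \<chi>\<delta> = Dom C d1" "Cod C \<chi>\<delta> = \<Omega>" using \<chi>\<delta> by (auto simp: hom_iff)
  obtain R where R: "R \<in> Arr C" "Dom C R = L" "Cod C R = Dom C r1" "r1 \<cdot> R = m" "r2 \<cdot> R = Idt C L"
    using prod_pair[OF rp mA id_arr[OF L]] mA m G_def L by auto
  have Rm: "monic C R"
    unfolding monic_def
  proof (intro conjI ballI impI)
    fix g h assume a: "g \<in> Arr C" "h \<in> Arr C" "Cod C g = Dom C R" "Cod C h = Dom C R" "Dom C g = Dom C h" "R \<cdot> g = R \<cdot> h"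
    have "r2 \<cdot> (R \<cdot> g) = Idt C L \<cdot> g" by (rule reassoc[OF R(5)]) (use a R RP in auto)
    also have "\<dots> = g" using a R by simp
    finally have 1: "r2 \<cdot> (R \<cdot> g) = g" .
    have "r2 \<cdot> (R \<cdot> h) = Idt C L \<cdot> h" by (rule reassoc[OF R(5)]) (use a R RP in auto)
    also have "\<dots> = h" using a R by simp
    finally have 2: "r2 \<cdot> (R \<cdot> h) = h" .
    show "g = h" using 1 2 a(6) by metis
  qed (rule R(1))
  have "\<exists>\<chi>. \<chi> \<in> hom C (Cod C R) \<Omega> \<and> (\<exists>u. is_pullback C \<chi> tr R u)" using classif Rm by blast
  then obtain \<chi>R uR where \<chi>R: "\<chi>R \<in> hom C (Dom C r1) \<Omega>" "is_pullback C \<chi>R tr R uR"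
    using R(3) by auto
  note PR = pbD[OF \<chi>R(2)]
  have cRA: "\<chi>R \<in> Arr C" "Dom C \<chi>R = Dom C r1" "Cod C \<chi>R = \<Omega>" using \<chi>R by (auto simp: hom_iff)
  obtain c hc where c: "c \<in> hom C G E" "hc \<in> hom C (Dom C r1) (Dom C \<pi>1)" "\<pi>1 \<cdot> hc = c \<cdot> r1" "\<pi>2 \<cdot> hc = r2" "ev \<cdot> hc = \<chi>R"
  proof -
    have "\<forall>f\<in>hom C (Dom C r1) \<Omega>. \<exists>!g. g \<in> hom C G E \<and>
              (\<exists>h\<in>hom C (Dom C r1) (Dom C \<pi>1).
                 \<pi>1 \<cdot> h = g \<cdot> r1 \<and> \<pi>2 \<cdot> h = r2 \<and> ev \<cdot> h = f)" using expo G rp by blast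
    then have "\<exists>g. g \<in> hom C G E \<and>
              (\<exists>h\<in>hom C (Dom C r1) (Dom C \<pi>1).
                 \<pi>1 \<cdot> h = g \<cdot> r1 \<and> \<pi>2 \<cdot> h = r2 \<and> ev \<cdot> h = \<chi>R)" using \<chi>R(1) by blast
    then show ?thesis using that by blast
  qed
  have cA: "c \<in> Arr C" "Dom C c = G" "Cod C c = E" "hc \<in> Arr C" "Dom C hc = Dom C r1" "Cod C hc = Dom C \<pi>1"
    using c by (auto simp: hom_iff)

  have trD: "Dom C uR = L" "Cod C uR = Dom C tr" "uR \<in> Arr C" using PR R by auto
  obtain k where k: "k \<in> Arr C" "Dom C k = Dom C d1" "Cod C k = Dom C r1" "r1 \<cdot> k = m \<cdot> d1" "r2 \<cdot> k = d2"
    using prod_pair[OF rp, of "m \<cdot> d1" d2] mA m DP G_def by auto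
  have \<delta>m: "monic C \<delta>"
    unfolding monic_def
  proof (intro conjI ballI impI)
    fix g h assume a: "g \<in> Arr C" "h \<in> Arr C" "Cod C g = Dom C \<delta>" "Cod C h = Dom C \<delta>" "Dom C g = Dom C h" "\<delta> \<cdot> g = \<delta> \<cdot> h"
    have "d2 \<cdot> (\<delta> \<cdot> g) = Idt C L \<cdot> g" by (rule reassoc[OF \<delta>(5)]) (use a \<delta> DP in auto)
    also have "\<dots> = g" using a \<delta> by simp
    finally have 1: "d2 \<cdot> (\<delta> \<cdot> g) = g" .
    have "d2 \<cdot> (\<delta> \<cdot> h) = Idt C L \<cdot> h" by (rule reassoc[OF \<delta>(5)]) (use a \<delta> DP in auto)
    also have "\<dots> = h" using a \<delta> by simp
    finally have 2: "d2 \<cdot> (\<delta> \<cdot> h) = h" .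
    show "g = h" using 1 2 a(6) by metis
  qed (rule \<delta>(1))
  have k\<delta>: "k \<cdot> \<delta> = R"
  proof (rule prod_uniq[OF rp])
    have "r1 \<cdot> (k \<cdot> \<delta>) = (m \<cdot> d1) \<cdot> \<delta>" by (rule reassoc[OF k(4)]) (use \<delta> k RP in auto)
    also have "\<dots> = m \<cdot> (d1 \<cdot> \<delta>)" using assoc \<delta> DP mA m by simp
    also have "\<dots> = r1 \<cdot> R" using \<delta> mA m R by simp
    finally show "r1 \<cdot> (k \<cdot> \<delta>) = r1 \<cdot> R" .
    have "r2 \<cdot> (k \<cdot> \<delta>) = d2 \<cdot> \<delta>" by (rule reassoc[OF k(5)]) (use \<delta> k RP in auto)
    then show "r2 \<cdot> (k \<cdot> \<delta>) = r2 \<cdot> R" using \<delta> R by simp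
  qed (use \<delta> k R in auto)
  have pb2: "is_pullback C (\<chi>R \<cdot> k) tr \<delta> uR"
    unfolding is_pullback_def
  proof (intro conjI ballI impI)
    show "\<chi>R \<cdot> k \<in> Arr C" "Cod C (\<chi>R \<cdot> k) = Cod C tr" "Cod C \<delta> = Dom C (\<chi>R \<cdot> k)" "Dom C \<delta> = Dom C uR"
      "tr \<in> Arr C" "\<delta> \<in> Arr C" "uR \<in> Arr C" "Cod C uR = Dom C tr"
      using k cRA tr \<delta> trD by auto
    show "(\<chi>R \<cdot> k) \<cdot> \<delta> = tr \<cdot> uR" using k cRA \<delta> k\<delta> PR by (simp add: assoc)
    fix p' q' assume a: "p' \<in> Arr C" "q' \<in> Arr C" "Cod C p' = Dom C (\<chi>R \<cdot> k)" "Cod C q' = Dom C tr"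
      "Dom C p' = Dom C q'" "(\<chi>R \<cdot> k) \<cdot> p' = tr \<cdot> q'"
    have a3: "Cod C p' = Dom C d1" using a k cRA by simp
    obtain w where w: "w \<in> Arr C" "Dom C w = Dom C p'" "Cod C w = L" "R \<cdot> w = k \<cdot> p'" "uR \<cdot> w = q'"
      apply (rule pb_factor[OF \<chi>R(2), of "k \<cdot> p'" q'])
      using a a3 k cRA R by (auto simp: assoc)
    have "r1 \<cdot> (k \<cdot> p') = (m \<cdot> d1) \<cdot> p'" by (rule reassoc[OF k(4)]) (use a3 a k RP in auto)
    also have "\<dots> = m \<cdot> (d1 \<cdot> p')" by (rule assoc) (use a3 a DP mA m in auto)
    finally have e1: "m \<cdot> (d1 \<cdot> p') = r1 \<cdot> (k \<cdot> p')" by simp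
    have e2: "r1 \<cdot> (R \<cdot> w) = m \<cdot> w" by (rule reassoc[OF R(4)]) (use w R RP in auto)
    have "m \<cdot> (d1 \<cdot> p') = m \<cdot> w" using e1 e2 w(4) by simp
    then have dp1: "d1 \<cdot> p' = w" by (rule monicD[OF m(1), rotated -1]) (use a3 a DP w m in auto)
    have e3: "r2 \<cdot> (k \<cdot> p') = d2 \<cdot> p'" by (rule reassoc[OF k(5)]) (use a3 a k RP in auto)
    have e4: "r2 \<cdot> (R \<cdot> w) = Idt C L \<cdot> w" by (rule reassoc[OF R(5)]) (use w R RP in auto)
    have dp2: "d2 \<cdot> p' = w" using e3 e4 w by simp
    have f1: "d1 \<cdot> (\<delta> \<cdot> w) = Idt C L \<cdot> w" by (rule reassoc[OF \<delta>(4)]) (use w \<delta> DP in auto)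
    have f2: "d2 \<cdot> (\<delta> \<cdot> w) = Idt C L \<cdot> w" by (rule reassoc[OF \<delta>(5)]) (use w \<delta> DP in auto)
    have dw: "\<delta> \<cdot> w = p'"
      by (rule prod_uniq[OF dp]) (use w \<delta> a a3 DP f1 f2 dp1 dp2 in auto)
    show "\<exists>!u. u \<in> hom C (Dom C p') (Dom C \<delta>) \<and> \<delta> \<cdot> u = p' \<and> uR \<cdot> u = q'"
    proof (rule ex1I[of _ w])
      show "w \<in> hom C (Dom C p') (Dom C \<delta>) \<and> \<delta> \<cdot> w = p' \<and> uR \<cdot> w = q'" using w dw \<delta> by (simp add: hom_iff)
      fix u assume u: "u \<in> hom C (Dom C p') (Dom C \<delta>) \<and> \<delta> \<cdot> u = p' \<and> uR \<cdot> u = q'"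
      have uA: "u \<in> Arr C" "Cod C u = L" using u \<delta> by (auto simp: hom_iff)
      have "d1 \<cdot> (\<delta> \<cdot> u) = Idt C L \<cdot> u" by (rule reassoc[OF \<delta>(4)]) (use uA \<delta> DP in auto)
      then have "d1 \<cdot> p' = u" using u uA by simp
      then show "u = w" using dp1 by simp
    qed
  qed
  have eq1: "\<chi>R \<cdot> k = \<chi>\<delta>"
  proof -
    have "\<exists>!\<chi>. \<chi> \<in> hom C (Cod C \<delta>) \<Omega> \<and> (\<exists>u. is_pullback C \<chi> tr \<delta> u)" using classif \<delta>m by blast
    moreover have "\<chi>R \<cdot> k \<in> hom C (Cod C \<delta>) \<Omega>" using k cRA \<delta> by (simp add: hom_iff)
    moreover have "\<chi>\<delta> \<in> hom C (Cod C \<delta>) \<Omega>" using \<chi>\<delta> \<delta> by simp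
    ultimately show ?thesis using pb2 \<chi>\<delta>(2) by blast
  qed
  have cms: "c \<cdot> m = s"
  proof -
    have "\<exists>!g. g \<in> hom C L E \<and> (\<exists>h\<in>hom C (Dom C d1) (Dom C \<pi>1).
                 \<pi>1 \<cdot> h = g \<cdot> d1 \<and> \<pi>2 \<cdot> h = d2 \<and> ev \<cdot> h = \<chi>\<delta>)"
      using expo L dp \<chi>\<delta>(1) by blast
    moreover have "s \<in> hom C L E \<and> (\<exists>h\<in>hom C (Dom C d1) (Dom C \<pi>1).
                 \<pi>1 \<cdot> h = s \<cdot> d1 \<and> \<pi>2 \<cdot> h = d2 \<and> ev \<cdot> h = \<chi>\<delta>)" using s by blast
    moreover have "c \<cdot> m \<in> hom C L E \<and> (\<exists>h\<in>hom C (Dom C d1) (Dom C \<pi>1).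
                 \<pi>1 \<cdot> h = (c \<cdot> m) \<cdot> d1 \<and> \<pi>2 \<cdot> h = d2 \<and> ev \<cdot> h = \<chi>\<delta>)"
    proof
      show "c \<cdot> m \<in> hom C L E" using cA mA m G_def by (simp add: hom_iff)
      show "\<exists>h\<in>hom C (Dom C d1) (Dom C \<pi>1). \<pi>1 \<cdot> h = (c \<cdot> m) \<cdot> d1 \<and> \<pi>2 \<cdot> h = d2 \<and> ev \<cdot> h = \<chi>\<delta>"
      proof (intro bexI conjI)
        show "hc \<cdot> k \<in> hom C (Dom C d1) (Dom C \<pi>1)" using cA k by (simp add: hom_iff)
        have "\<pi>1 \<cdot> (hc \<cdot> k) = c \<cdot> (r1 \<cdot> k)" using reassoc[OF c(3), of k] cA k RP EP G_def by (simp add: assoc)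
        also have "\<dots> = (c \<cdot> m) \<cdot> d1" using k cA mA m DP G_def by (simp add: assoc)
        finally show "\<pi>1 \<cdot> (hc \<cdot> k) = (c \<cdot> m) \<cdot> d1" .
        show "\<pi>2 \<cdot> (hc \<cdot> k) = d2" using reassoc[OF c(4), of k] cA k RP EP by simp
        show "ev \<cdot> (hc \<cdot> k) = \<chi>\<delta>" using reassoc[OF c(5), of k] cA k evA eq1 by simp
      qed
    qed
    ultimately show ?thesis by blast
  qed

  have cm: "c \<in> hom C (Cod C m) E" using c G_def by simp
  have ud: "u\<delta> \<in> Arr C" "Dom C u\<delta> = L" "Cod C u\<delta> = Dom C tr" "\<chi>\<delta> \<cdot> \<delta> = tr \<cdot> u\<delta>"
    using pbD[OF \<chi>\<delta>(2)] \<delta> by auto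
  have main: "g = m \<cdot> x" if a: "x \<in> Arr C" "g \<in> Arr C" "Cod C x = L" "Cod C g = G" "Dom C x = Dom C g"
     "s \<cdot> x = c \<cdot> g" for x g
  proof -
    define X where "X = Dom C x"
    have X: "X \<in> Obj C" using a X_def by simp
    obtain e1 e2 where ep: "is_product C X L e1 e2" using bp X L unfolding has_binary_products_def by blast
    note EE = prodD[OF ep]
    obtain xx where xx: "xx \<in> Arr C" "Dom C xx = Dom C e1" "Cod C xx = Dom C d1" "d1 \<cdot> xx = x \<cdot> e1" "d2 \<cdot> xx = e2"
      using prod_pair[OF dp, of "x \<cdot> e1" e2] a EE X_def by auto
    obtain gg where gg: "gg \<in> Arr C" "Dom C gg = Dom C e1" "Cod C gg = Dom C r1" "r1 \<cdot> gg = g \<cdot> e1" "r2 \<cdot> gg = e2"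
      using prod_pair[OF rp, of "g \<cdot> e1" e2] a EE X_def by auto
    have H: "hs \<cdot> xx = hc \<cdot> gg"
    proof (rule prod_uniq[OF Ep])
      have "\<pi>1 \<cdot> (hs \<cdot> xx) = (s \<cdot> d1) \<cdot> xx" by (rule reassoc[OF s(3)]) (use sA xx EP in auto)
      also have "\<dots> = s \<cdot> (d1 \<cdot> xx)" by (rule assoc) (use sA xx DP in auto)
      also have "\<dots> = s \<cdot> (x \<cdot> e1)" using xx by simp
      also have "\<dots> = (s \<cdot> x) \<cdot> e1" by (rule assoc[symmetric]) (use sA a EE X_def in auto)
      also have "\<dots> = (c \<cdot> g) \<cdot> e1" using a by simp
      also have "\<dots> = c \<cdot> (g \<cdot> e1)" by (rule assoc) (use cA a EE X_def in auto)
      also have "\<dots> = c \<cdot> (r1 \<cdot> gg)" using gg by simp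
      also have "\<dots> = (c \<cdot> r1) \<cdot> gg" by (rule assoc[symmetric]) (use cA gg RP in auto)
      also have "\<dots> = \<pi>1 \<cdot> (hc \<cdot> gg)" by (rule reassoc[OF c(3), symmetric]) (use cA gg EP in auto)
      finally show "\<pi>1 \<cdot> (hs \<cdot> xx) = \<pi>1 \<cdot> (hc \<cdot> gg)" .
      have "\<pi>2 \<cdot> (hs \<cdot> xx) = d2 \<cdot> xx" by (rule reassoc[OF s(4)]) (use sA xx EP in auto)
      moreover have "\<pi>2 \<cdot> (hc \<cdot> gg) = r2 \<cdot> gg" by (rule reassoc[OF c(4)]) (use cA gg EP in auto)
      ultimately show "\<pi>2 \<cdot> (hs \<cdot> xx) = \<pi>2 \<cdot> (hc \<cdot> gg)" using xx gg by simp
    qed (use sA cA xx gg in auto)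
    have Q: "\<chi>\<delta> \<cdot> xx = \<chi>R \<cdot> gg"
    proof -
      have "ev \<cdot> (hs \<cdot> xx) = \<chi>\<delta> \<cdot> xx" by (rule reassoc[OF s(5)]) (use sA xx evA in auto)
      moreover have "ev \<cdot> (hc \<cdot> gg) = \<chi>R \<cdot> gg" by (rule reassoc[OF c(5)]) (use cA gg evA in auto)
      ultimately show ?thesis using H by simp
    qed
    obtain j where j: "j \<in> Arr C" "Dom C j = X" "Cod C j = Dom C e1" "e1 \<cdot> j = Idt C X" "e2 \<cdot> j = x"
      by (rule prod_pair[OF ep, of "Idt C X" x]) (use a EE X X_def in auto)
    have xxj: "xx \<cdot> j = \<delta> \<cdot> x"
    proof (rule prod_uniq[OF dp])
      have "d1 \<cdot> (xx \<cdot> j) = (x \<cdot> e1) \<cdot> j" by (rule reassoc[OF xx(4)]) (use xx j DP in auto)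
      also have "\<dots> = x \<cdot> (e1 \<cdot> j)" by (rule assoc) (use a j EE X_def in auto)
      also have "\<dots> = x" using j a X_def by simp
      also have "\<dots> = Idt C L \<cdot> x" using a by simp
      also have "\<dots> = d1 \<cdot> (\<delta> \<cdot> x)" by (rule reassoc[OF \<delta>(4), symmetric]) (use a \<delta> DP in auto)
      finally show "d1 \<cdot> (xx \<cdot> j) = d1 \<cdot> (\<delta> \<cdot> x)" .
      have "d2 \<cdot> (xx \<cdot> j) = e2 \<cdot> j" by (rule reassoc[OF xx(5)]) (use xx j DP in auto)
      also have "\<dots> = Idt C L \<cdot> x" using j a by simp
      also have "\<dots> = d2 \<cdot> (\<delta> \<cdot> x)" by (rule reassoc[OF \<delta>(5), symmetric]) (use a \<delta> DP in auto)
      finally show "d2 \<cdot> (xx \<cdot> j) = d2 \<cdot> (\<delta> \<cdot> x)" .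
    qed (use xx j \<delta> a X_def in auto)
    define n where "n = gg \<cdot> j"
    have nA: "n \<in> Arr C" "Dom C n = X" "Cod C n = Dom C r1" using n_def gg j by auto
    have "\<chi>R \<cdot> n = (\<chi>R \<cdot> gg) \<cdot> j" unfolding n_def by (rule assoc[symmetric]) (use cRA gg j in auto)
    also have "\<dots> = (\<chi>\<delta> \<cdot> xx) \<cdot> j" using Q by simp
    also have "\<dots> = \<chi>\<delta> \<cdot> (\<delta> \<cdot> x)" using xxj assoc[of j xx \<chi>\<delta>] cdA xx j by simp
    also have "\<dots> = (\<chi>\<delta> \<cdot> \<delta>) \<cdot> x" by (rule assoc[symmetric]) (use cdA \<delta> a in auto)
    also have "\<dots> = tr \<cdot> (u\<delta> \<cdot> x)" using ud(4) assoc[of x u\<delta> tr] ud a tr by simp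
    finally have nq: "\<chi>R \<cdot> n = tr \<cdot> (u\<delta> \<cdot> x)" .
    obtain w where w: "w \<in> Arr C" "Dom C w = Dom C n" "Cod C w = Dom C R" "R \<cdot> w = n" "uR \<cdot> w = u\<delta> \<cdot> x"
      by (rule pb_factor[OF \<chi>R(2) nA(1), of "u\<delta> \<cdot> x"]) (use nA ud a cRA X_def nq in auto)
    have "w = Idt C L \<cdot> w" using w R by simp
    also have "\<dots> = r2 \<cdot> (R \<cdot> w)" by (rule reassoc[OF R(5), symmetric]) (use w R RP in auto)
    also have "\<dots> = r2 \<cdot> (gg \<cdot> j)" using w n_def by simp
    also have "\<dots> = e2 \<cdot> j" by (rule reassoc[OF gg(5)]) (use gg j RP in auto)
    also have "\<dots> = x" using j by simp
    finally have wx: "w = x" .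
    have "m \<cdot> w = r1 \<cdot> (R \<cdot> w)" by (rule reassoc[OF R(4), symmetric]) (use w R RP in auto)
    also have "\<dots> = r1 \<cdot> (gg \<cdot> j)" using w n_def by simp
    also have "\<dots> = (g \<cdot> e1) \<cdot> j" by (rule reassoc[OF gg(4)]) (use gg j RP in auto)
    also have "\<dots> = g \<cdot> (e1 \<cdot> j)" by (rule assoc) (use a j EE X_def in auto)
    also have "\<dots> = g" using j a X_def by simp
    finally show "g = m \<cdot> x" using wx by simp
  qed
  show ?thesis using cm cms main G_def by blast
qed

end


theorem corollary2:
  fixes C :: "('o, 'a) category"
  assumes "topos C"
  shows "strongly_amendable C"
proof -
  have cat: "is_category C" using assms unfolding topos_def by blast
  interpret cat C by (rule cat.intro[OF cat])
  have cc: "cartesian_closed C" and sc: "has_subobject_classifier C" using assms unfolding topos_def by blast+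
  have bp: "has_binary_products C" using cc unfolding cartesian_closed_def by blast
  obtain one \<Omega> tr where tr: "\<Omega> \<in> Obj C" "tr \<in> hom C one \<Omega>"
    and classif: "\<forall>m. monic C m \<longrightarrow> (\<exists>!\<chi>. \<chi> \<in> hom C (Cod C m) \<Omega> \<and> (\<exists>u. is_pullback C \<chi> tr m u))"
    using sc unfolding has_subobject_classifier_def by blast
  have trA: "tr \<in> Arr C" "Cod C tr = \<Omega>" using tr by (auto simp: hom_iff)
  show ?thesis unfolding strongly_amendable_def
  proof (intro ballI)
    fix tL assume tL: "tL \<in> Arr C"
    define L where "L = Dom C tL"
    define L' where "L' = Cod C tL"
    have L: "L \<in> Obj C" "L' \<in> Obj C" using tL L_def L'_def by auto
    obtain E ev \<pi>1 \<pi>2 where Ep: "is_product C E L \<pi>1 \<pi>2" and ev: "ev \<in> hom C (Dom C \<pi>1) \<Omega>"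
      and expo: "\<forall>A\<in>Obj C. \<forall>q1 q2. is_product C A L q1 q2 \<longrightarrow>
           (\<forall>f\<in>hom C (Dom C q1) \<Omega>. \<exists>!g. g \<in> hom C A E \<and>
              (\<exists>h\<in>hom C (Dom C q1) (Dom C \<pi>1).
                 Cmp C \<pi>1 h = Cmp C g q1 \<and> Cmp C \<pi>2 h = q2 \<and> Cmp C ev h = f))"
      using cc L tr(1) unfolding cartesian_closed_def by blast
    obtain d1 d2 where dp: "is_product C L L d1 d2" using bp L unfolding has_binary_products_def by blast
    note DP = prodD[OF dp]
    obtain \<delta> where \<delta>: "\<delta> \<in> Arr C" "Dom C \<delta> = L" "Cod C \<delta> = Dom C d1" "d1 \<cdot> \<delta> = Idt C L" "d2 \<cdot> \<delta> = Idt C L"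
      by (rule prod_pair[OF dp, of "Idt C L" "Idt C L"]) (use L in auto)
    have \<delta>m: "monic C \<delta>" by (rule split_monic[of \<delta> d1]) (use \<delta> DP in auto)
    have "\<exists>\<chi>. \<chi> \<in> hom C (Cod C \<delta>) \<Omega> \<and> (\<exists>u. is_pullback C \<chi> tr \<delta> u)" using classif \<delta>m by blast
    then obtain \<chi>\<delta> u\<delta> where \<chi>\<delta>: "\<chi>\<delta> \<in> hom C (Dom C d1) \<Omega>" "is_pullback C \<chi>\<delta> tr \<delta> u\<delta>"
      using \<delta> by auto
    have "\<exists>g. g \<in> hom C L E \<and> (\<exists>h\<in>hom C (Dom C d1) (Dom C \<pi>1).
                 \<pi>1 \<cdot> h = g \<cdot> d1 \<and> \<pi>2 \<cdot> h = d2 \<and> ev \<cdot> h = \<chi>\<delta>)"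
      using expo L dp \<chi>\<delta>(1) by blast
    then obtain s hs where s: "s \<in> hom C L E" "hs \<in> hom C (Dom C d1) (Dom C \<pi>1)" "\<pi>1 \<cdot> hs = s \<cdot> d1" "\<pi>2 \<cdot> hs = d2" "ev \<cdot> hs = \<chi>\<delta>"
      by blast
    interpret K: ksetup C tr \<Omega> L E ev \<pi>1 \<pi>2 d1 d2 \<delta> \<chi>\<delta> u\<delta> s hs
      by (unfold_locales) (use L trA classif Ep ev expo dp \<delta> \<chi>\<delta> s bp in auto)
    show "\<exists>t' \<beta>. monic C t' \<and> Dom C t' = Dom C tL \<and> \<beta> \<in> hom C (Cod C t') (Cod C tL) \<and>
        Cmp C \<beta> t' = tL \<and>
        (\<forall>m \<alpha>. monic C m \<and> Dom C m = Dom C tL \<and> \<alpha> \<in> hom C (Cod C m) (Cod C tL) \<and> Cmp C \<alpha> m = tL \<longrightarrow>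
           (\<exists>\<alpha>'. \<alpha>' \<in> hom C (Cod C m) (Cod C t') \<and> Cmp C \<alpha>' m = t' \<and> Cmp C \<beta> \<alpha>' = \<alpha> \<and>
              is_pullback C t' \<alpha>' (Idt C (Dom C tL)) m))"
    proof -
      have sA: "s \<in> Arr C" "Dom C s = L" "Cod C s = E" using s by (auto simp: hom_iff)
      note EP = prodD[OF Ep]
      obtain \<rho>1 \<rho>2 where qp: "is_product C E L' \<rho>1 \<rho>2" using bp EP L unfolding has_binary_products_def by blast
      note QP = prodD[OF qp]
      obtain t' where t': "t' \<in> Arr C" "Dom C t' = L" "Cod C t' = Dom C \<rho>1" "\<rho>1 \<cdot> t' = s" "\<rho>2 \<cdot> t' = tL"
        by (rule prod_pair[OF qp, of s tL]) (use sA tL L_def L'_def in auto)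
      have sm: "g = h" if a: "g \<in> Arr C" "h \<in> Arr C" "Cod C g = L" "Cod C h = L" "Dom C g = Dom C h" "s \<cdot> g = s \<cdot> h" for g h
      proof -
        obtain c1 where c1: "c1 \<in> hom C (Cod C (Idt C L)) E" "c1 \<cdot> Idt C L = s"
          "\<forall>x g. x \<in> Arr C \<and> g \<in> Arr C \<and> Cod C x = L \<and> Cod C g = Cod C (Idt C L) \<and> Dom C x = Dom C g \<and>
             s \<cdot> x = c1 \<cdot> g \<longrightarrow> g = Idt C L \<cdot> x"
          using K.K[OF id_monic[OF L(1)]] L by auto
        have "c1 = s" using c1(1,2) L by (auto simp: hom_iff)
        then have "h = Idt C L \<cdot> g" using c1(3) a L by auto
        then show ?thesis using a by simp
      qed
      have t'm: "monic C t'"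
        unfolding monic_def
      proof (intro conjI ballI impI)
        fix g h assume a: "g \<in> Arr C" "h \<in> Arr C" "Cod C g = Dom C t'" "Cod C h = Dom C t'" "Dom C g = Dom C h" "t' \<cdot> g = t' \<cdot> h"
        have "s \<cdot> g = \<rho>1 \<cdot> (t' \<cdot> g)" by (rule reassoc[OF t'(4), symmetric]) (use a t' QP in auto)
        also have "\<dots> = \<rho>1 \<cdot> (t' \<cdot> h)" using a by simp
        also have "\<dots> = s \<cdot> h" by (rule reassoc[OF t'(4)]) (use a t' QP in auto)
        finally show "g = h" using sm a t' by auto
      qed (rule t'(1))
      have part2: "\<exists>\<alpha>'. \<alpha>' \<in> hom C (Cod C m) (Cod C t') \<and> Cmp C \<alpha>' m = t' \<and> Cmp C \<rho>2 \<alpha>' = \<alpha> \<and>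
              is_pullback C t' \<alpha>' (Idt C (Dom C tL)) m"
        if ma: "monic C m" "Dom C m = Dom C tL" "\<alpha> \<in> hom C (Cod C m) (Cod C tL)" "\<alpha> \<cdot> m = tL" for m \<alpha>
      proof -
        have mA: "m \<in> Arr C" using ma unfolding monic_def by blast
        have aA: "\<alpha> \<in> Arr C" "Dom C \<alpha> = Cod C m" "Cod C \<alpha> = L'" using ma L'_def by (auto simp: hom_iff)
        obtain c where c: "c \<in> hom C (Cod C m) E" "c \<cdot> m = s"
          "\<forall>x g. x \<in> Arr C \<and> g \<in> Arr C \<and> Cod C x = L \<and> Cod C g = Cod C m \<and> Dom C x = Dom C g \<and>
             s \<cdot> x = c \<cdot> g \<longrightarrow> g = m \<cdot> x"
          using K.K[OF ma(1)] ma(2) L_def by auto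
        have cA: "c \<in> Arr C" "Dom C c = Cod C m" "Cod C c = E" using c by (auto simp: hom_iff)
        obtain a' where a': "a' \<in> Arr C" "Dom C a' = Cod C m" "Cod C a' = Dom C \<rho>1" "\<rho>1 \<cdot> a' = c" "\<rho>2 \<cdot> a' = \<alpha>"
          by (rule prod_pair[OF qp, of c \<alpha>]) (use cA aA in auto)
        have am: "a' \<cdot> m = t'"
        proof (rule prod_uniq[OF qp])
          have "\<rho>1 \<cdot> (a' \<cdot> m) = c \<cdot> m" by (rule reassoc[OF a'(4)]) (use a' mA QP in auto)
          then show "\<rho>1 \<cdot> (a' \<cdot> m) = \<rho>1 \<cdot> t'" using c t' by simp
          have "\<rho>2 \<cdot> (a' \<cdot> m) = \<alpha> \<cdot> m" by (rule reassoc[OF a'(5)]) (use a' mA QP in auto)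
          then show "\<rho>2 \<cdot> (a' \<cdot> m) = \<rho>2 \<cdot> t'" using ma t' by simp
        qed (use a' mA t' ma L_def in auto)
        have pb: "is_pullback C t' a' (Idt C (Dom C tL)) m"
          unfolding is_pullback_def
        proof (intro conjI ballI impI)
          show "t' \<in> Arr C" "a' \<in> Arr C" "Idt C (Dom C tL) \<in> Arr C" "m \<in> Arr C" "Cod C t' = Cod C a'"
            "Cod C (Idt C (Dom C tL)) = Dom C t'" "Cod C m = Dom C a'" "Dom C (Idt C (Dom C tL)) = Dom C m"
            using t' a' mA ma L L_def by auto
          show "t' \<cdot> Idt C (Dom C tL) = a' \<cdot> m" using am t' L_def by simp
          fix p' q' assume b: "p' \<in> Arr C" "q' \<in> Arr C" "Cod C p' = Dom C t'" "Cod C q' = Dom C a'"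
            "Dom C p' = Dom C q'" "t' \<cdot> p' = a' \<cdot> q'"
          have "s \<cdot> p' = \<rho>1 \<cdot> (t' \<cdot> p')" by (rule reassoc[OF t'(4), symmetric]) (use b t' QP in auto)
          also have "\<dots> = \<rho>1 \<cdot> (a' \<cdot> q')" using b by simp
          also have "\<dots> = c \<cdot> q'" by (rule reassoc[OF a'(4)]) (use b a' QP in auto)
          finally have "q' = m \<cdot> p'" using c(3) b t' a' by auto
          show "\<exists>!u. u \<in> hom C (Dom C p') (Dom C (Idt C (Dom C tL))) \<and> Idt C (Dom C tL) \<cdot> u = p' \<and> m \<cdot> u = q'"
          proof (rule ex1I[of _ p'])
            show "p' \<in> hom C (Dom C p') (Dom C (Idt C (Dom C tL))) \<and> Idt C (Dom C tL) \<cdot> p' = p' \<and> m \<cdot> p' = q'"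
              using b t' L L_def \<open>q' = m \<cdot> p'\<close> by (simp add: hom_iff)
            fix u assume "u \<in> hom C (Dom C p') (Dom C (Idt C (Dom C tL))) \<and> Idt C (Dom C tL) \<cdot> u = p' \<and> m \<cdot> u = q'"
            then show "u = p'" using L L_def by (auto simp: hom_iff)
          qed
        qed
        show ?thesis
          by (rule exI[of _ a']) (use a' am pb t' L'_def in \<open>auto simp: hom_iff\<close>)
      qed
      show ?thesis
        apply (rule exI[of _ t'], rule exI[of _ \<rho>2])
        using t'm t' QP L_def L'_def part2 by (auto simp: hom_iff)
    qed
  qed
qed

end
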